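(* Let $K\ge2$ be an integer, let $\phi,\Phi$ be the standard normal PDF and CDF, and let $t\mapsto\tilde\alpha_t\in[0,1)$ be a differentiable (Gaussian) noise schedule with time-derivative $\tilde\alpha_t'$. Define $$\mathcal T(\tilde\alpha_t)=\frac{K}{K-1}\left[\int_{-\infty}^{\infty}\phi(z-\nu_t)\Phi^{K-1}(z)\,dz-\frac1K\right],\qquad \nu_t=\frac{\tilde\alpha_t}{\sqrt{1-\tilde\alpha_t^2}},$$ and for $n\ge0$ let $M_n=\int_{-\infty}^\infty z^n\phi(z)\Phi^{K-1}(z)\,dz$ and $I_n=\int_{-\infty}^\infty z^{n+1}\phi(z)\Phi^{K-1}(z)\,dz$. Then $$\frac{d}{dt}\mathcal T(\tilde\alpha_t)=\frac{K\,e^{-\nu_t^2/2}}{K-1}\,\frac{\tilde\alpha_t'}{(1-\tilde\alpha_t^2)^{3/2}}\sum_{n=0}^{\infty}\frac{\nu_t^n}{n!}\big[I_n-\nu_tM_n\big].$$ *)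

theory Defs
  imports "HOL-Probability.Probability"
begin

abbreviation std_phi :: "real \<Rightarrow> real" where
  "std_phi \<equiv> std_normal_density"

definition std_Phi :: "real \<Rightarrow> real" where
  "std_Phi x = (LBINT z:{..x}. std_normal_density z)"

definition nu_of :: "real \<Rightarrow> real" where
  "nu_of a = a / sqrt (1 - a\<^sup>2)"

definition calT :: "nat \<Rightarrow> real \<Rightarrow> real" where
  "calT K a = real K / (real K - 1) *
     ((LBINT z. std_phi (z - nu_of a) * std_Phi z ^ (K - 1)) - 1 / real K)"

definition M_mom :: "nat \<Rightarrow> nat \<Rightarrow> real" where
  "M_mom K n = (LBINT z. z ^ n * std_phi z * std_Phi z ^ (K - 1))"

definition I_mom :: "nat \<Rightarrow> nat \<Rightarrow> real" where
  "I_mom K n = (LBINT z. z ^ (n + 1) * std_phi z * std_Phi z ^ (K - 1))"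

end

theory Submission
  imports Defs
begin

lemma Phi_mono: "mono std_Phi"
proof (rule monoI)
  fix x y :: real assume "x \<le> y"
  have i1: "integrable lborel (\<lambda>z. indicator {..x} z * std_normal_density z)"
    by (rule Bochner_Integration.integrable_bound[OF integrable_normal_density]) (auto simp: indicator_def)
  have i2: "integrable lborel (\<lambda>z. indicator {..y} z * std_normal_density z)"
    by (rule Bochner_Integration.integrable_bound[OF integrable_normal_density]) (auto simp: indicator_def)
  have "(LBINT z. indicator {..x} z * std_normal_density z) \<le> (LBINT z. indicator {..y} z * std_normal_density z)"
    by (rule integral_mono[OF i1 i2]) (use \<open>x \<le> y\<close> in \<open>auto simp: indicator_def\<close>)
  then show "std_Phi x \<le> std_Phi y" by (simp add: std_Phi_def set_lebesgue_integral_def)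
qed

lemma Phi_bounds: "0 \<le> std_Phi x \<and> std_Phi x \<le> 1"
proof
  show "0 \<le> std_Phi x" unfolding std_Phi_def set_lebesgue_integral_def
    by (intro integral_nonneg_AE) auto
  have i1: "integrable lborel (\<lambda>z. indicator {..x} z * std_normal_density z)"
    by (rule Bochner_Integration.integrable_bound[OF integrable_normal_density]) (auto simp: indicator_def)
  have "(LBINT z. indicator {..x} z * std_normal_density z) \<le> (LBINT z. std_normal_density z)"
    by (rule integral_mono[OF i1]) (auto simp: indicator_def)
  then show "std_Phi x \<le> 1" by (simp add: std_Phi_def set_lebesgue_integral_def)
qed

lemma Phi_meas[measurable]: "std_Phi \<in> borel_measurable borel"
  by (rule borel_measurable_mono[OF Phi_mono])

lemma exp_normal: "exp (c * z) * std_normal_density z = exp (c\<^sup>2/2) * normal_density c 1 z"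
  by (simp add: normal_density_def mult_exp_exp power2_eq_square field_simps)

lemma integrable_exp_normal: "integrable lborel (\<lambda>z. exp (c * z) * std_normal_density z)"
  unfolding exp_normal by simp

lemma exp_abs_le: "exp (c * \<bar>z\<bar>) * std_normal_density z \<le> exp (c * z) * std_normal_density z + exp (-c * z) * std_normal_density z"
proof -
  have "exp (c * \<bar>z\<bar>) \<le> exp (c * z) + exp (-c * z)"
    by (cases "z \<ge> 0") (auto simp: add_increasing add_increasing2)
  then show ?thesis by (metis distrib_right mult_right_mono normal_density_nonneg)
qed

lemma integrable_exp_abs_normal: "integrable lborel (\<lambda>z. exp (c * \<bar>z\<bar>) * std_normal_density z)"
proof -
  have "integrable lborel (\<lambda>z. exp (c * z) * std_normal_density z + exp ((-c) * z) * std_normal_density z)"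
    using integrable_exp_normal[of c] integrable_exp_normal[of "-c"] by (rule Bochner_Integration.integrable_add)
  then show ?thesis
    by (rule Bochner_Integration.integrable_bound) (use exp_abs_le[of c] in \<open>auto intro!: AE_I2 add_nonneg_nonneg\<close>)
qed

lemma pow_fact_le_exp: assumes "(x::real) \<ge> 0" shows "x^n / fact n \<le> exp x"
proof -
  have s: "(\<lambda>i. x^i / fact i) sums exp x"
    using exp_converges[of x] by (simp add: divide_inverse mult.commute)
  have "x^n / fact n = (\<Sum>i\<in>{n}. x^i / fact i)" by simp
  also have "\<dots> \<le> (\<Sum>i. x^i / fact i)"
    by (rule sum_le_suminf) (use s assms in \<open>auto simp: sums_iff\<close>)
  also have "\<dots> = exp x" using s by (simp add: sums_iff)
  finally show ?thesis .
qed

lemma pow_le_exp: fixes c z :: real assumes "c > 0" shows "\<bar>z\<bar>^n \<le> fact n / c^n * exp (c * \<bar>z\<bar>)"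
proof -
  have "(c*\<bar>z\<bar>)^n / fact n \<le> exp (c*\<bar>z\<bar>)"
    by (rule pow_fact_le_exp) (use assms in auto)
  then show ?thesis using assms by (simp add: field_simps power_mult_distrib)
qed

lemma integrable_mom: "integrable lborel (\<lambda>z. z ^ n * std_phi z * std_Phi z ^ m)"
proof (rule Bochner_Integration.integrable_bound[OF integrable_std_normal_moment_abs[of n]])
  show "AE z in lborel. norm (z ^ n * std_phi z * std_Phi z ^ m) \<le> norm (std_phi z * \<bar>z\<bar> ^ n)"
  proof (intro AE_I2)
    fix z
    have "std_Phi z ^ m \<le> 1" using Phi_bounds[of z] by (simp add: power_le_one)
    moreover have "0 \<le> std_Phi z ^ m" using Phi_bounds[of z] by simp
    ultimately have "\<bar>z\<bar> ^ n * std_phi z * std_Phi z ^ m \<le> \<bar>z\<bar> ^ n * std_phi z * 1"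
      by (intro mult_left_mono) auto
    then show "norm (z ^ n * std_phi z * std_Phi z ^ m) \<le> norm (std_phi z * \<bar>z\<bar> ^ n)"
      using \<open>0 \<le> std_Phi z ^ m\<close> Phi_bounds[of z] by (simp add: abs_mult power_abs mult.commute)
  qed
qed simp

lemma abs_mom_bound:
  assumes "c > 0"
  shows "(LBINT z. \<bar>z\<bar>^n * std_phi z) \<le> fact n / c^n * (LBINT z. exp (c * \<bar>z\<bar>) * std_phi z)"
proof -
  have "(LBINT z. \<bar>z\<bar>^n * std_phi z) \<le> (LBINT z. fact n / c^n * (exp (c * \<bar>z\<bar>) * std_phi z))"
  proof (rule integral_mono)
    show "integrable lborel (\<lambda>z. \<bar>z\<bar>^n * std_phi z)"
      using integrable_std_normal_moment_abs[of n] by (simp add: mult.commute)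
    show "integrable lborel (\<lambda>z. fact n / c^n * (exp (c * \<bar>z\<bar>) * std_phi z))"
      using integrable_exp_abs_normal by simp
    fix z :: real
    show "\<bar>z\<bar>^n * std_phi z \<le> fact n / c^n * (exp (c * \<bar>z\<bar>) * std_phi z)"
      using pow_le_exp[OF assms, of z n] by (metis mult.assoc mult_right_mono normal_density_nonneg)
  qed
  then show ?thesis by simp
qed

lemma series_M:
  fixes x :: real
  shows "(\<lambda>n. M_mom K n / fact n * x^n) sums (LBINT z. exp (x * z) * (std_phi z * std_Phi z ^ (K - 1)))"
proof -
  define f where "f n z = x^n / fact n * (z ^ n * std_phi z * std_Phi z ^ (K - 1))" for n z
  define c where "c = 2 * \<bar>x\<bar> + 1"
  define E where "E = (LBINT z. exp (c * \<bar>z\<bar>) * std_phi z)"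
  have c: "c > 0" by (simp add: c_def add_nonneg_pos)
  have int: "integrable lborel (f n)" for n
    unfolding f_def by (intro integrable_mult_right integrable_mom)
  have hP: "0 \<le> std_Phi z ^ (K - 1)" "std_Phi z ^ (K - 1) \<le> 1" for z
    using Phi_bounds[of z] by (auto simp: power_le_one)
  have nf: "norm (f n z) = (\<bar>x\<bar> * \<bar>z\<bar>)^n / fact n * (std_phi z * std_Phi z ^ (K - 1))" for n z
    using Phi_bounds[of z] by (simp add: f_def abs_mult power_abs power_mult_distrib)
  have sm: "summable (\<lambda>n. norm (f n z))" for z
  proof -
    have "summable (\<lambda>n. inverse (fact n) * (\<bar>x\<bar> * \<bar>z\<bar>)^n)" by (rule summable_exp)
    then have "summable (\<lambda>n. inverse (fact n) * (\<bar>x\<bar> * \<bar>z\<bar>)^n * (std_phi z * std_Phi z ^ (K - 1)))"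
      by (rule summable_mult2)
    then show ?thesis unfolding nf by (simp add: divide_inverse mult.commute)
  qed
  have bound: "(LBINT z. norm (f n z)) \<le> E * (\<bar>x\<bar> / c)^n" for n
  proof -
    have "(LBINT z. norm (f n z)) \<le> (LBINT z. \<bar>x\<bar>^n / fact n * (\<bar>z\<bar>^n * std_phi z))"
    proof (rule integral_mono)
      show "integrable lborel (\<lambda>z. norm (f n z))" using int by auto
      show "integrable lborel (\<lambda>z. \<bar>x\<bar>^n / fact n * (\<bar>z\<bar>^n * std_phi z))"
        using integrable_std_normal_moment_abs[of n] by (simp add: mult.commute)
      fix z
      have "(\<bar>x\<bar> * \<bar>z\<bar>)^n / fact n * (std_phi z * std_Phi z ^ (K - 1)) \<le> (\<bar>x\<bar> * \<bar>z\<bar>)^n / fact n * (std_phi z * 1)"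
        using hP[of z] by (intro mult_left_mono) auto
      then show "norm (f n z) \<le> \<bar>x\<bar>^n / fact n * (\<bar>z\<bar>^n * std_phi z)"
        unfolding nf by (simp add: power_mult_distrib)
    qed
    also have "\<dots> = \<bar>x\<bar>^n / fact n * (LBINT z. \<bar>z\<bar>^n * std_phi z)" by simp
    also have "\<dots> \<le> \<bar>x\<bar>^n / fact n * (fact n / c^n * E)"
      unfolding E_def by (intro mult_left_mono abs_mom_bound c) auto
    also have "\<dots> = E * (\<bar>x\<bar> / c)^n" by (simp add: power_divide)
    finally show ?thesis .
  qed
  have sI: "summable (\<lambda>n. LBINT z. norm (f n z))"
  proof (rule summable_comparison_test)
    show "\<exists>N. \<forall>n\<ge>N. norm (LBINT z. norm (f n z)) \<le> E * (\<bar>x\<bar> / c)^n"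
      using bound by (auto intro!: exI[of _ 0] simp: integral_nonneg_AE)
    have "\<bar>\<bar>x\<bar> / c\<bar> < 1" using c by (simp add: c_def)
    then show "summable (\<lambda>n. E * (\<bar>x\<bar> / c)^n)"
      by (intro summable_mult summable_geometric) (simp only: real_norm_def)
  qed
  have "(\<lambda>n. LBINT z. f n z) sums (LBINT z. (\<Sum>n. f n z))"
    by (rule sums_integral[OF int _ sI]) (use sm in auto)
  moreover have "(LBINT z. f n z) = M_mom K n / fact n * x^n" for n
    by (simp add: f_def M_mom_def)
  moreover have "(\<Sum>n. f n z) = exp (x * z) * (std_phi z * std_Phi z ^ (K - 1))" for z
  proof -
    have "(\<lambda>n. (x*z)^n / fact n) sums exp (x * z)"
      using exp_converges[of "x*z"] by (simp add: divide_inverse mult.commute)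
    then have "(\<lambda>n. (x*z)^n / fact n * (std_phi z * std_Phi z ^ (K - 1))) sums (exp (x * z) * (std_phi z * std_Phi z ^ (K - 1)))"
      by (rule sums_mult2)
    then show ?thesis unfolding f_def by (simp add: sums_iff power_mult_distrib algebra_simps)
  qed
  ultimately show ?thesis by simp
qed


definition FM :: "nat \<Rightarrow> real \<Rightarrow> real" where
  "FM K x = (\<Sum>n. M_mom K n / fact n * x^n)"

lemma FM_sums: "(\<lambda>n. M_mom K n / fact n * x^n) sums FM K x"
  using series_M[of K x] unfolding FM_def by (simp add: sums_iff)

lemma diffs_M: "diffs (\<lambda>n. M_mom K n / fact n) n = I_mom K n / fact n"
proof -
  have e: "I_mom K n = M_mom K (Suc n)" by (simp add: M_mom_def I_mom_def)
  have f: "fact (Suc n) = real (Suc n) * (fact n :: real)" by simp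
  show ?thesis unfolding diffs_def e f by simp
qed

lemma FM_deriv: "(FM K has_real_derivative (\<Sum>n. I_mom K n / fact n * x^n)) (at x)"
  and FM'_sums: "(\<lambda>n. I_mom K n / fact n * x^n) sums (\<Sum>n. I_mom K n / fact n * x^n)"
proof -
  have sm: "\<And>y. summable (\<lambda>n. M_mom K n / fact n * y^n)"
    using FM_sums by (auto simp: sums_iff)
  show "(FM K has_real_derivative (\<Sum>n. I_mom K n / fact n * x^n)) (at x)"
    using termdiffs_strong_converges_everywhere[OF sm, of x] unfolding diffs_M
    by (simp add: FM_def[abs_def])
  show "(\<lambda>n. I_mom K n / fact n * x^n) sums (\<Sum>n. I_mom K n / fact n * x^n)"
    using termdiff_converges_all[OF sm, of x] unfolding diffs_M by (simp add: sums_iff)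
qed

lemma G_eq: "(LBINT z. std_phi (z - v) * std_Phi z ^ (K - 1)) = exp (- v\<^sup>2 / 2) * FM K v"
proof -
  have pt: "std_phi (z - v) * std_Phi z ^ (K - 1) = exp (- v\<^sup>2 / 2) * (exp (v * z) * (std_phi z * std_Phi z ^ (K - 1)))" for z
  proof -
    have ex: "- (z - v)\<^sup>2 / 2 = - v\<^sup>2 / 2 + (v * z + - z\<^sup>2 / 2)"
      by (simp add: power2_eq_square field_simps)
    have "std_phi (z - v) = exp (- v\<^sup>2 / 2) * (exp (v * z) * std_phi z)"
      unfolding std_normal_density_def ex exp_add by (simp only: mult_ac)
    then show ?thesis by (simp only: mult_ac)
  qed
  have "(LBINT z. std_phi (z - v) * std_Phi z ^ (K - 1)) = (LBINT z. exp (- v\<^sup>2 / 2) * (exp (v * z) * (std_phi z * std_Phi z ^ (K - 1))))"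
    by (rule Bochner_Integration.integral_cong[OF refl pt])
  also have "\<dots> = exp (- v\<^sup>2 / 2) * (LBINT z. exp (v * z) * (std_phi z * std_Phi z ^ (K - 1)))"
    by (rule integral_mult_right_zero)
  also have "\<dots> = exp (- v\<^sup>2 / 2) * FM K v"
    using sums_unique2[OF series_M[of K v] FM_sums[of K v]] by simp
  finally show ?thesis .
qed

lemma nu_deriv:
  assumes "\<bar>a\<bar> < 1"
  shows "(nu_of has_real_derivative 1 / (1 - a\<^sup>2) powr (3/2)) (at a)"
proof -
  have p: "0 < 1 - a\<^sup>2" using assms by (simp add: abs_square_less_1)
  have q: "sqrt (1 - a\<^sup>2) > 0" using p by simp
  have d1: "((\<lambda>a. 1 - a\<^sup>2) has_real_derivative (- (2 * a))) (at a)"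
    by (auto intro!: derivative_eq_intros)
  have d2: "((\<lambda>a. sqrt (1 - a\<^sup>2)) has_real_derivative (inverse (sqrt (1 - a\<^sup>2)) / 2 * (- (2 * a)))) (at a)"
    using DERIV_chain2[OF DERIV_real_sqrt[OF p] d1] .
  have d: "((\<lambda>a. a / sqrt (1 - a\<^sup>2)) has_real_derivative
     (1 * sqrt (1 - a\<^sup>2) - (inverse (sqrt (1 - a\<^sup>2)) / 2 * (- (2 * a))) * a) / (sqrt (1 - a\<^sup>2) ^ Suc (Suc 0))) (at a)"
    by (rule DERIV_quotient[OF DERIV_ident d2]) (use q in simp)
  have s: "sqrt (1 - a\<^sup>2) ^ Suc (Suc 0) = 1 - a\<^sup>2" using p by (metis less_imp_le numeral_2_eq_2 real_sqrt_pow2)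
  have pw: "(1 - a\<^sup>2) powr (3/2) = (1 - a\<^sup>2) * sqrt (1 - a\<^sup>2)"
  proof -
    have "(1 - a\<^sup>2) powr (3/2) = (1 - a\<^sup>2) powr (1 + 1/2)" by simp
    also have "\<dots> = (1 - a\<^sup>2) * sqrt (1 - a\<^sup>2)" using p by (simp only: powr_add powr_half_sqrt) simp
    finally show ?thesis .
  qed
  have e: "(1 * sqrt (1 - a\<^sup>2) - (inverse (sqrt (1 - a\<^sup>2)) / 2 * (- (2 * a))) * a) / (sqrt (1 - a\<^sup>2) ^ Suc (Suc 0))
      = 1 / (1 - a\<^sup>2) powr (3/2)"
  proof -
    have "1 * sqrt (1 - a\<^sup>2) - (inverse (sqrt (1 - a\<^sup>2)) / 2 * (- (2 * a))) * a = 1 / sqrt (1 - a\<^sup>2)"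
      using q s by (simp add: field_simps power2_eq_square)
    then show ?thesis unfolding s pw using q p by (simp add: field_simps)
  qed
  from d show ?thesis unfolding e nu_of_def[abs_def] .
qed


lemma g1: "(e::real) * (- v) * F + F' * e = e * (F' - v * F)" by (simp add: algebra_simps)
lemma g2: "(x::real)^n / f * (I - x*M) = I/f*x^n - x*(M/f*x^n)" by (simp add: divide_inverse algebra_simps)
lemma g3: "(k::real) / (k - 1) * (e * S * (1 / P * A) - 0) = k * e / (k - 1) * (A / P) * S" by (simp add: divide_inverse algebra_simps)

lemma H_deriv: "((\<lambda>v. exp (- v\<^sup>2 / 2) * FM K v) has_real_derivative
    exp (- v\<^sup>2 / 2) * ((\<Sum>n. I_mom K n / fact n * v^n) - v * FM K v)) (at v)"
proof -
  have e: "((\<lambda>v. exp (- v\<^sup>2 / 2)) has_real_derivative exp (- v\<^sup>2 / 2) * (- v)) (at v)"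
    by (auto intro!: derivative_eq_intros)
  show ?thesis
    using DERIV_mult[OF e FM_deriv[of K v]] unfolding g1 .
qed

theorem proposition8:
  fixes K :: nat and \<alpha> \<alpha>' :: "real \<Rightarrow> real" and t :: real
  assumes "K \<ge> 2"
    and "\<And>s. 0 \<le> \<alpha> s \<and> \<alpha> s < 1"
    and "\<And>s. (\<alpha> has_real_derivative \<alpha>' s) (at s)"
  shows "\<exists>S. (\<lambda>n. nu_of (\<alpha> t) ^ n / fact n * (I_mom K n - nu_of (\<alpha> t) * M_mom K n)) sums S \<and>
    ((\<lambda>s. calT K (\<alpha> s)) has_real_derivative
       (real K * exp (- (nu_of (\<alpha> t))\<^sup>2 / 2) / (real K - 1)
        * (\<alpha>' t / (1 - (\<alpha> t)\<^sup>2) powr (3/2)) * S)) (at t)"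
proof -
  define a where "a = \<alpha> t"
  define v where "v = nu_of a"
  define F' where "F' = (\<Sum>n. I_mom K n / fact n * v^n)"
  define S where "S = F' - v * FM K v"
  have sS: "(\<lambda>n. v ^ n / fact n * (I_mom K n - v * M_mom K n)) sums S"
  proof -
    have "(\<lambda>n. I_mom K n / fact n * v^n - v * (M_mom K n / fact n * v^n)) sums (F' - v * FM K v)"
      by (rule sums_diff[OF FM'_sums[of K v, folded F'_def] sums_mult[OF FM_sums[of K v]]])
    then show ?thesis unfolding S_def g2 .
  qed
  have a: "\<bar>a\<bar> < 1" using assms(2)[of t] by (simp add: a_def)
  have dnu: "((\<lambda>s. nu_of (\<alpha> s)) has_real_derivative 1 / (1 - a\<^sup>2) powr (3/2) * \<alpha>' t) (at t)"
    using DERIV_chain2[OF nu_deriv[OF a, unfolded a_def] assms(3)[of t]] unfolding a_def .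
  have dH: "((\<lambda>s. exp (- (nu_of (\<alpha> s))\<^sup>2 / 2) * FM K (nu_of (\<alpha> s))) has_real_derivative
      exp (- v\<^sup>2 / 2) * S * (1 / (1 - a\<^sup>2) powr (3/2) * \<alpha>' t)) (at t)"
    using DERIV_chain2[OF H_deriv[of K "nu_of (\<alpha> t)"] dnu] unfolding S_def F'_def v_def a_def .
  have calT_eq: "calT K (\<alpha> s) = real K / (real K - 1) * (exp (- (nu_of (\<alpha> s))\<^sup>2 / 2) * FM K (nu_of (\<alpha> s)) - 1 / real K)" for s
    unfolding calT_def G_eq ..
  have d: "((\<lambda>s. calT K (\<alpha> s)) has_real_derivative
      real K / (real K - 1) * (exp (- v\<^sup>2 / 2) * S * (1 / (1 - a\<^sup>2) powr (3/2) * \<alpha>' t) - 0)) (at t)"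
    unfolding calT_eq by (intro DERIV_cmult DERIV_diff dH DERIV_const)
  have eq: "real K / (real K - 1) * (exp (- v\<^sup>2 / 2) * S * (1 / (1 - a\<^sup>2) powr (3/2) * \<alpha>' t) - 0)
     = real K * exp (- v\<^sup>2 / 2) / (real K - 1) * (\<alpha>' t / (1 - a\<^sup>2) powr (3/2)) * S"
    by (rule g3)
  show ?thesis
  proof (intro exI[of _ S] conjI)
    show "(\<lambda>n. nu_of (\<alpha> t) ^ n / fact n * (I_mom K n - nu_of (\<alpha> t) * M_mom K n)) sums S"
      using sS unfolding v_def a_def .
    show "((\<lambda>s. calT K (\<alpha> s)) has_real_derivative
       (real K * exp (- (nu_of (\<alpha> t))\<^sup>2 / 2) / (real K - 1)
        * (\<alpha>' t / (1 - (\<alpha> t)\<^sup>2) powr (3/2)) * S)) (at t)"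
      using d[unfolded eq] unfolding v_def a_def .
  qed
qed

end
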